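(* For every regular language $L\subseteq\Sigma^*$, the nondeterministic state complexity $\mathrm{ns}(L)$ equals the least degree of any boolean representation of the free monoid $\Sigma^*$ that extends the canonical representation $\kappa_L\circ\mu_L\colon\Sigma^*\to\mathbf{JSL}(\mathrm{LQ}(L),\mathrm{LQ}(L))$, $w\mapsto(K\mapsto w^{-1}K)$.
   Context: $\mathrm{LQ}(L)$ is the finite semilattice (under $\subseteq$, join $=\cup$) of all finite unions, including $\emptyset$, of left derivatives $u^{-1}L=\{w:uw\in L\}$. For a finite semilattice $S$, $\mathbf{JSL}(S,S)$ is the set of join-preserving maps $S\to S$, a monoid under $f\cdot g:=g\circ f$. A boolean representation of a monoid $M$ is a finite semilattice $S$ with a monoid morphism $\rho\colon M\to\mathbf{JSL}(S,S)$; its degree is $|J(S)|$, the number of join-irreducible elements of $S$ ($j\ne\bot$ with $j=\bigvee X\Rightarrow j\in X$). An equivariant map $\rho_1\to\rho_2$ between representations on $S_1,S_2$ is a join-preserving $f\colon S_1\to S_2$ with $f(\rho_1(m)(s))=\rho_2(m)(f(s))$ for all $m,s$; $\rho_2$ extends $\rho_1$ if there is an injective equivariant map $\rho_1\to\rho_2$. $\mathrm{ns}(L)$ is the least number of states of an nfa (finite state set, transition relations, sets of initial and final states; several initial states allowed) accepting $L$. *)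

theory Defs
  imports Main
begin

definition is_nfa :: "'q set \<Rightarrow> ('q \<times> 'a \<times> 'q) set \<Rightarrow> 'q set \<Rightarrow> 'q set \<Rightarrow> bool" where
  "is_nfa Q T I F \<longleftrightarrow> finite Q \<and> T \<subseteq> Q \<times> UNIV \<times> Q \<and> I \<subseteq> Q \<and> F \<subseteq> Q"

definition nfa_steps :: "('q \<times> 'a \<times> 'q) set \<Rightarrow> 'q set \<Rightarrow> 'a list \<Rightarrow> 'q set" where
  "nfa_steps T P w = fold (\<lambda>a P. {q'. \<exists>q\<in>P. (q, a, q') \<in> T}) w P"

definition nfa_lang :: "('q \<times> 'a \<times> 'q) set \<Rightarrow> 'q set \<Rightarrow> 'q set \<Rightarrow> 'a list set" where
  "nfa_lang T I F = {w. nfa_steps T I w \<inter> F \<noteq> {}}"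

text \<open>States are taken from nat; every finite state set can be relabelled into nat.\<close>

definition regular :: "'a list set \<Rightarrow> bool" where
  "regular L \<longleftrightarrow> (\<exists>(Q::nat set) T I F. is_nfa Q T I F \<and> nfa_lang T I F = L)"

definition ns :: "'a list set \<Rightarrow> nat" where
  "ns L = (LEAST n. \<exists>(Q::nat set) T I F. is_nfa Q T I F \<and> card Q = n \<and> nfa_lang T I F = L)"

definition lderiv :: "'a list \<Rightarrow> 'a list set \<Rightarrow> 'a list set" where
  "lderiv u L = {w. u @ w \<in> L}"

definition LQ :: "'a list set \<Rightarrow> 'a list set set" where
  "LQ L = {\<Union>X | X. finite X \<and> X \<subseteq> range (\<lambda>u. lderiv u L)}"

definition fin_jsl :: "'b set \<Rightarrow> ('b \<Rightarrow> 'b \<Rightarrow> 'b) \<Rightarrow> 'b \<Rightarrow> bool" where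
  "fin_jsl S join bt \<longleftrightarrow> finite S \<and> bt \<in> S
     \<and> (\<forall>x\<in>S. \<forall>y\<in>S. join x y \<in> S)
     \<and> (\<forall>x\<in>S. \<forall>y\<in>S. \<forall>z\<in>S. join (join x y) z = join x (join y z))
     \<and> (\<forall>x\<in>S. \<forall>y\<in>S. join x y = join y x)
     \<and> (\<forall>x\<in>S. join x x = x)
     \<and> (\<forall>x\<in>S. join bt x = x)"

definition jsl_le :: "('b \<Rightarrow> 'b \<Rightarrow> 'b) \<Rightarrow> 'b \<Rightarrow> 'b \<Rightarrow> bool" where
  "jsl_le join x y \<longleftrightarrow> join x y = y"

definition is_join_of :: "'b set \<Rightarrow> ('b \<Rightarrow> 'b \<Rightarrow> 'b) \<Rightarrow> 'b set \<Rightarrow> 'b \<Rightarrow> bool" where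
  "is_join_of S join X j \<longleftrightarrow> j \<in> S \<and> (\<forall>x\<in>X. jsl_le join x j)
     \<and> (\<forall>u\<in>S. (\<forall>x\<in>X. jsl_le join x u) \<longrightarrow> jsl_le join j u)"

definition join_irreducibles :: "'b set \<Rightarrow> ('b \<Rightarrow> 'b \<Rightarrow> 'b) \<Rightarrow> 'b \<Rightarrow> 'b set" where
  "join_irreducibles S join bt =
     {j \<in> S. j \<noteq> bt \<and> (\<forall>X. X \<subseteq> S \<and> is_join_of S join X j \<longrightarrow> j \<in> X)}"

definition degree :: "'b set \<Rightarrow> ('b \<Rightarrow> 'b \<Rightarrow> 'b) \<Rightarrow> 'b \<Rightarrow> nat" where
  "degree S join bt = card (join_irreducibles S join bt)"

definition join_preserving ::
  "'b set \<Rightarrow> ('b \<Rightarrow> 'b \<Rightarrow> 'b) \<Rightarrow> 'b \<Rightarrow> 'c set \<Rightarrow> ('c \<Rightarrow> 'c \<Rightarrow> 'c) \<Rightarrow> 'c \<Rightarrow> ('b \<Rightarrow> 'c) \<Rightarrow> bool" where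
  "join_preserving S1 join1 bt1 S2 join2 bt2 f \<longleftrightarrow>
     (\<forall>x\<in>S1. f x \<in> S2) \<and> f bt1 = bt2 \<and>
     (\<forall>x\<in>S1. \<forall>y\<in>S1. f (join1 x y) = join2 (f x) (f y))"

text \<open>A monoid morphism rho from the free monoid (words, concatenation) to
 JSL(S,S) with multiplication f \<cdot> g = g \<circ> f: rho [] = id and
 rho (u @ v) = rho v \<circ> rho u (on S).\<close>
definition bool_rep :: "'b set \<Rightarrow> ('b \<Rightarrow> 'b \<Rightarrow> 'b) \<Rightarrow> 'b \<Rightarrow> ('a list \<Rightarrow> 'b \<Rightarrow> 'b) \<Rightarrow> bool" where
  "bool_rep S join bt \<rho> \<longleftrightarrow> fin_jsl S join bt
     \<and> (\<forall>w. join_preserving S join bt S join bt (\<rho> w))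
     \<and> (\<forall>x\<in>S. \<rho> [] x = x)
     \<and> (\<forall>u v. \<forall>x\<in>S. \<rho> (u @ v) x = \<rho> v (\<rho> u x))"

definition canon_rep :: "'a list set \<Rightarrow> 'a list \<Rightarrow> 'a list set \<Rightarrow> 'a list set" where
  "canon_rep L w K = lderiv w K"

definition equivariant ::
  "'b set \<Rightarrow> ('b \<Rightarrow> 'b \<Rightarrow> 'b) \<Rightarrow> 'b \<Rightarrow> ('a list \<Rightarrow> 'b \<Rightarrow> 'b) \<Rightarrow>
   'c set \<Rightarrow> ('c \<Rightarrow> 'c \<Rightarrow> 'c) \<Rightarrow> 'c \<Rightarrow> ('a list \<Rightarrow> 'c \<Rightarrow> 'c) \<Rightarrow> ('b \<Rightarrow> 'c) \<Rightarrow> bool" where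
  "equivariant S1 join1 bt1 \<rho>1 S2 join2 bt2 \<rho>2 f \<longleftrightarrow>
     join_preserving S1 join1 bt1 S2 join2 bt2 f \<and>
     (\<forall>m. \<forall>s\<in>S1. f (\<rho>1 m s) = \<rho>2 m (f s))"

definition extends_canon :: "'a list set \<Rightarrow> 'b set \<Rightarrow> ('b \<Rightarrow> 'b \<Rightarrow> 'b) \<Rightarrow> 'b \<Rightarrow> ('a list \<Rightarrow> 'b \<Rightarrow> 'b) \<Rightarrow> bool" where
  "extends_canon L S join bt \<rho> \<longleftrightarrow>
     (\<exists>f. inj_on f (LQ L) \<and> equivariant (LQ L) (\<union>) {} (canon_rep L) S join bt \<rho> f)"

end

theory Submission
  imports Defs
begin


lemma nfa_steps_Nil[simp]: "nfa_steps T P [] = P" by (simp add: nfa_steps_def)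
lemma nfa_steps_Cons[simp]: "nfa_steps T P (a#w) = nfa_steps T {q'. \<exists>q\<in>P. (q,a,q') \<in> T} w"
  by (simp add: nfa_steps_def)
lemma nfa_steps_append: "nfa_steps T P (u@v) = nfa_steps T (nfa_steps T P u) v"
  by (simp add: nfa_steps_def)
lemma nfa_steps_snoc: "nfa_steps T P (w@[a]) = {q'. \<exists>q\<in>nfa_steps T P w. (q,a,q') \<in> T}"
  by (simp add: nfa_steps_append)
lemma nfa_steps_sub: "T \<subseteq> Q \<times> UNIV \<times> Q \<Longrightarrow> P \<subseteq> Q \<Longrightarrow> nfa_steps T P w \<subseteq> Q"
proof (induction w arbitrary: P)
  case Nil then show ?case by simp
next
  case (Cons a w)
  have "{q'. \<exists>q\<in>P. (q,a,q') \<in> T} \<subseteq> Q" using Cons.prems by blast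
  then show ?case using Cons by simp
qed

lemma nfa_steps_UN: "nfa_steps T P w = (\<Union>p\<in>P. nfa_steps T {p} w)"
proof (induction w arbitrary: P)
  case Nil then show ?case by auto
next
  case (Cons a w)
  have "nfa_steps T P (a#w) = (\<Union>q'\<in>{q'. \<exists>q\<in>P. (q,a,q')\<in>T}. nfa_steps T {q'} w)"
    using Cons.IH[of "{q'. \<exists>q\<in>P. (q,a,q')\<in>T}"] by simp
  also have "\<dots> = (\<Union>p\<in>P. \<Union>q'\<in>{q'. (p,a,q')\<in>T}. nfa_steps T {q'} w)" by blast
  also have "\<dots> = (\<Union>p\<in>P. nfa_steps T {p} (a#w))"
  proof (rule SUP_cong[OF refl])
    fix p assume "p \<in> P"
    show "(\<Union>q'\<in>{q'. (p,a,q')\<in>T}. nfa_steps T {q'} w) = nfa_steps T {p} (a#w)"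
      using Cons.IH[of "{q'. (p,a,q')\<in>T}"] by simp
  qed
  finally show ?case .
qed

lemma lderiv_nfa_lang: "lderiv u (nfa_lang T P F) = nfa_lang T (nfa_steps T P u) F"
  by (simp add: lderiv_def nfa_lang_def nfa_steps_append)

lemma nfa_lang_UN: "nfa_lang T P F = (\<Union>p\<in>P. nfa_lang T {p} F)"
  unfolding nfa_lang_def using nfa_steps_UN[of T P] by blast

lemma nfa_relabel:
  fixes Q :: "'q set"
  assumes "is_nfa Q T I F"
  shows "\<exists>(Q'::nat set) T' I' F'. is_nfa Q' T' I' F' \<and> card Q' = card Q \<and> nfa_lang T' I' F' = nfa_lang T I F"
proof -
  have fin: "finite Q" and TQ: "T \<subseteq> Q \<times> UNIV \<times> Q" and IQ: "I \<subseteq> Q" and FQ: "F \<subseteq> Q"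
    using assms by (auto simp: is_nfa_def)
  obtain h where h: "bij_betw h Q {0..<card Q}" using ex_bij_betw_finite_nat[OF fin] by blast
  have inj: "inj_on h Q" using h by (simp add: bij_betw_def)
  define T' where "T' = (\<lambda>(p,a,q). (h p, a, h q)) ` T"
  have st: "P \<subseteq> Q \<Longrightarrow> nfa_steps T' (h`P) w = h ` nfa_steps T P w" for P w
  proof (induction w arbitrary: P)
    case Nil then show ?case by simp
  next
    case (Cons a w)
    have sub: "{q'. \<exists>q\<in>P. (q,a,q')\<in>T} \<subseteq> Q" using TQ by blast
    have "{q'. \<exists>q\<in>h`P. (q,a,q')\<in>T'} = h ` {q'. \<exists>q\<in>P. (q,a,q')\<in>T}"
    proof
      show "{q'. \<exists>q\<in>h`P. (q,a,q')\<in>T'} \<subseteq> h ` {q'. \<exists>q\<in>P. (q,a,q')\<in>T}"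
      proof
        fix x assume "x \<in> {q'. \<exists>q\<in>h`P. (q,a,q')\<in>T'}"
        then obtain p p1 q1 where p: "p \<in> P" "(p1,a,q1) \<in> T" "h p = h p1" "x = h q1"
          unfolding T'_def by auto
        have "p1 \<in> Q" "p \<in> Q" using p TQ Cons.prems by auto
        then have "p = p1" using inj p(3) by (simp add: inj_on_def)
        then show "x \<in> h ` {q'. \<exists>q\<in>P. (q,a,q')\<in>T}" using p by blast
      qed
      show "h ` {q'. \<exists>q\<in>P. (q,a,q')\<in>T} \<subseteq> {q'. \<exists>q\<in>h`P. (q,a,q')\<in>T'}"
        unfolding T'_def by force
    qed
    then show ?case using Cons.IH[OF sub] by simp
  qed
  have "is_nfa (h`Q) T' (h`I) (h`F)"
    using fin TQ IQ FQ unfolding is_nfa_def T'_def by auto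
  moreover have "card (h`Q) = card Q" using inj by (simp add: card_image)
  moreover have "nfa_lang T' (h`I) (h`F) = nfa_lang T I F"
  proof -
    have "nfa_steps T' (h`I) w \<inter> h`F = h ` (nfa_steps T I w \<inter> F)" for w
      using st[OF IQ] inj_on_image_Int[OF inj nfa_steps_sub[OF TQ IQ] FQ] by simp
    then show ?thesis unfolding nfa_lang_def by auto
  qed
  ultimately show ?thesis by blast
qed




definition lub :: "'b set \<Rightarrow> ('b \<Rightarrow> 'b \<Rightarrow> 'b) \<Rightarrow> 'b set \<Rightarrow> 'b \<Rightarrow> bool" where
  "lub S join R t \<longleftrightarrow> t \<in> S \<and> (\<forall>u\<in>S. jsl_le join t u \<longleftrightarrow> (\<forall>x\<in>R. jsl_le join x u))"

context
  fixes S join bt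
  assumes J: "fin_jsl S join bt"
begin

lemma jc: "x \<in> S \<Longrightarrow> y \<in> S \<Longrightarrow> join x y \<in> S" using J unfolding fin_jsl_def by blast
lemma ja: "x \<in> S \<Longrightarrow> y \<in> S \<Longrightarrow> z \<in> S \<Longrightarrow> join (join x y) z = join x (join y z)" using J unfolding fin_jsl_def by blast
lemma jcomm: "x \<in> S \<Longrightarrow> y \<in> S \<Longrightarrow> join x y = join y x" using J unfolding fin_jsl_def by blast
lemma jid: "x \<in> S \<Longrightarrow> join x x = x" using J unfolding fin_jsl_def by blast
lemma jbt: "x \<in> S \<Longrightarrow> join bt x = x" using J unfolding fin_jsl_def by blast
lemma btS: "bt \<in> S" using J unfolding fin_jsl_def by blast
lemma finS: "finite S" using J unfolding fin_jsl_def by blast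

lemma le_refl: "x \<in> S \<Longrightarrow> jsl_le join x x" by (simp add: jsl_le_def jid)
lemma bt_le: "x \<in> S \<Longrightarrow> jsl_le join bt x" by (simp add: jsl_le_def jbt)
lemma le_antisym: "x \<in> S \<Longrightarrow> y \<in> S \<Longrightarrow> jsl_le join x y \<Longrightarrow> jsl_le join y x \<Longrightarrow> x = y"
  unfolding jsl_le_def by (metis jcomm)
lemma le_trans: "x \<in> S \<Longrightarrow> y \<in> S \<Longrightarrow> z \<in> S \<Longrightarrow> jsl_le join x y \<Longrightarrow> jsl_le join y z \<Longrightarrow> jsl_le join x z"
  unfolding jsl_le_def by (metis ja)
lemma join_le_iff: "x \<in> S \<Longrightarrow> y \<in> S \<Longrightarrow> u \<in> S \<Longrightarrow>
   jsl_le join (join x y) u \<longleftrightarrow> jsl_le join x u \<and> jsl_le join y u"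
proof
  assume xyu: "x \<in> S" "y \<in> S" "u \<in> S" and h: "jsl_le join (join x y) u"
  have "join x u = join x (join (join x y) u)" using h by (simp add: jsl_le_def)
  also have "\<dots> = join (join x y) u" using xyu by (metis ja jc jid)
  finally have 1: "jsl_le join x u" using h by (simp add: jsl_le_def)
  have "join y u = join y (join (join x y) u)" using h by (simp add: jsl_le_def)
  also have "\<dots> = join (join x y) u" using xyu by (metis ja jc jid jcomm)
  finally have 2: "jsl_le join y u" using h by (simp add: jsl_le_def)
  show "jsl_le join x u \<and> jsl_le join y u" using 1 2 by blast
next
  assume xyu: "x \<in> S" "y \<in> S" "u \<in> S" and h: "jsl_le join x u \<and> jsl_le join y u"
  then show "jsl_le join (join x y) u" unfolding jsl_le_def by (metis ja)
qed

lemma lub_unique: "lub S join R t \<Longrightarrow> lub S join R t' \<Longrightarrow> t = t'"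
  unfolding lub_def by (metis le_antisym le_refl)

lemma lub_ub: "lub S join R t \<Longrightarrow> x \<in> R \<Longrightarrow> jsl_le join x t"
  unfolding lub_def using le_refl by blast

lemma lub_finite:
  assumes "finite R" "R \<subseteq> S" "join_preserving S join bt S join bt g"
  shows "\<exists>t. lub S join R t \<and> lub S join (g`R) (g t)"
  using assms(1,2)
proof (induction R rule: finite_induct)
  case empty
  have "lub S join {} bt" unfolding lub_def using btS bt_le by auto
  moreover have "lub S join (g`{}) (g bt)" using assms(3) btS bt_le
    unfolding lub_def join_preserving_def by auto
  ultimately show ?case by blast
next
  case (insert x R)
  then obtain t where t: "lub S join R t" "lub S join (g`R) (g t)" by auto
  have x: "x \<in> S" using insert by auto
  have gp: "\<forall>x\<in>S. g x \<in> S" "\<forall>x\<in>S. \<forall>y\<in>S. g (join x y) = join (g x) (g y)"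
    using assms(3) unfolding join_preserving_def by auto
  have tS: "t \<in> S" using t unfolding lub_def by auto
  have "lub S join (insert x R) (join x t)"
    using t(1) x tS jc join_le_iff unfolding lub_def by auto
  moreover have "lub S join (g`insert x R) (g (join x t))"
    using t(2) x tS gp jc join_le_iff unfolding lub_def by auto
  ultimately show ?case by blast
qed

lemma is_join_of_lub: "X \<subseteq> S \<Longrightarrow> is_join_of S join X j \<longleftrightarrow> lub S join X j"
  unfolding is_join_of_def lub_def using le_trans le_refl by blast

lemma decomp:
  "s \<in> S \<Longrightarrow> lub S join {j \<in> join_irreducibles S join bt. jsl_le join j s} s"
proof (induction "card {t\<in>S. jsl_le join t s \<and> t \<noteq> s}" arbitrary: s rule: less_induct)
  case (less s)
  let ?J = "join_irreducibles S join bt"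
  have JS: "?J \<subseteq> S" unfolding join_irreducibles_def by auto
  consider "s = bt" | "s \<in> ?J" | "s \<noteq> bt" "s \<notin> ?J" by blast
  then show ?case
  proof cases
    case 1
    have "{j \<in> ?J. jsl_le join j s} = {}"
      using 1 btS bt_le le_antisym unfolding join_irreducibles_def by blast
    then show ?thesis using 1 btS bt_le unfolding lub_def by auto
  next
    case 2
    then show ?thesis using less.prems JS le_refl le_trans unfolding lub_def by blast
  next
    case 3
    then obtain X where X: "X \<subseteq> S" "is_join_of S join X s" "s \<notin> X"
      using less.prems unfolding join_irreducibles_def by blast
    have Xl: "lub S join X s" using X is_join_of_lub by blast
    have IH: "lub S join {j \<in> ?J. jsl_le join j x} x" if x: "x \<in> X" for x
    proof (rule less.hyps)
      show xS: "x \<in> S" using x X by auto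
      have xs: "jsl_le join x s" "x \<noteq> s" using x X Xl lub_ub by auto
      show "card {t\<in>S. jsl_le join t x \<and> t \<noteq> x} < card {t\<in>S. jsl_le join t s \<and> t \<noteq> s}"
      proof (rule psubset_card_mono)
        show "finite {t\<in>S. jsl_le join t s \<and> t \<noteq> s}" using finS by auto
        have "{t\<in>S. jsl_le join t x \<and> t \<noteq> x} \<subseteq> {t\<in>S. jsl_le join t s \<and> t \<noteq> s}"
          using xS xs less.prems le_trans le_antisym by blast
        moreover have "x \<in> {t\<in>S. jsl_le join t s \<and> t \<noteq> s}" using xS xs by auto
        ultimately show "{t\<in>S. jsl_le join t x \<and> t \<noteq> x} \<subset> {t\<in>S. jsl_le join t s \<and> t \<noteq> s}"
          by blast
      qed
    qed
    show ?thesis unfolding lub_def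
    proof (intro conjI ballI)
      show "s \<in> S" by fact
      fix u assume u: "u \<in> S"
      show "jsl_le join s u = (\<forall>x\<in>{j \<in> ?J. jsl_le join j s}. jsl_le join x u)"
      proof
        assume "jsl_le join s u" then show "\<forall>x\<in>{j \<in> ?J. jsl_le join j s}. jsl_le join x u"
          using u less.prems JS le_trans by blast
      next
        assume h: "\<forall>x\<in>{j \<in> ?J. jsl_le join j s}. jsl_le join x u"
        have "jsl_le join x u" if x: "x \<in> X" for x
        proof -
          have xs: "jsl_le join x s" "x \<in> S" using x X Xl lub_ub by auto
          have "\<forall>j\<in>{j \<in> ?J. jsl_le join j x}. jsl_le join j u"
            using h xs less.prems JS le_trans by blast
          then show ?thesis using IH[OF x] u unfolding lub_def by blast
        qed
        then show "jsl_le join s u" using Xl u unfolding lub_def by blast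
      qed
    qed
  qed
qed

end



lemma ns_le:
  assumes "is_nfa (Q::'q set) T I F" "nfa_lang T I F = L"
  shows "ns L \<le> card Q"
proof -
  obtain Q' T' I' F' where "is_nfa (Q'::nat set) T' I' F'" "card Q' = card Q" "nfa_lang T' I' F' = L"
    using nfa_relabel[OF assms(1)] assms(2) by metis
  then show ?thesis unfolding ns_def by (intro Least_le) blast
qed

lemma derivs_finite:
  assumes "regular L" shows "finite (range (\<lambda>u. lderiv u L))"
proof -
  obtain Q T I F where N: "is_nfa (Q::nat set) T I F" "nfa_lang T I F = L"
    using assms unfolding regular_def by blast
  have TQ: "T \<subseteq> Q \<times> UNIV \<times> Q" and IQ: "I \<subseteq> Q" and fin: "finite Q" using N(1) by (auto simp: is_nfa_def)
  have "range (\<lambda>u. lderiv u L) \<subseteq> (\<lambda>P. nfa_lang T P F) ` Pow Q"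
    using N(2) lderiv_nfa_lang nfa_steps_sub[OF TQ IQ] by blast
  then show ?thesis using fin by (meson finite_Pow_iff finite_imageI finite_subset)
qed

lemma lderiv_LQ: "lderiv w L \<in> LQ L"
  unfolding LQ_def by (rule CollectI, rule exI[of _ "{lderiv w L}"]) auto

lemma lderiv_Nil: "lderiv [] L = L" by (simp add: lderiv_def)

lemma part1:
  fixes L :: "'a list set" and S :: "'b set"
  assumes reg: "regular L" and rep: "bool_rep S join bt \<rho>" and ext: "extends_canon L S join bt \<rho>"
  shows "ns L \<le> degree S join bt"
proof -
  obtain f where inj: "inj_on f (LQ L)" and eq: "equivariant (LQ L) (\<union>) {} (canon_rep L) S join bt \<rho> f"
    using ext unfolding extends_canon_def by blast
  have J: "fin_jsl S join bt" and rp: "\<And>w. join_preserving S join bt S join bt (\<rho> w)"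
    and r0: "\<And>x. x \<in> S \<Longrightarrow> \<rho> [] x = x" and rapp: "\<And>u v x. x \<in> S \<Longrightarrow> \<rho> (u@v) x = \<rho> v (\<rho> u x)"
    using rep unfolding bool_rep_def by auto
  have rS: "\<And>w x. x \<in> S \<Longrightarrow> \<rho> w x \<in> S" using rp unfolding join_preserving_def by blast
  have fp: "join_preserving (LQ L) (\<union>) {} S join bt f" and fe: "\<And>m s. s \<in> LQ L \<Longrightarrow> f (lderiv m s) = \<rho> m (f s)"
    using eq unfolding equivariant_def canon_rep_def by auto
  have fS: "\<And>K. K \<in> LQ L \<Longrightarrow> f K \<in> S" and fj: "\<And>A B. A \<in> LQ L \<Longrightarrow> B \<in> LQ L \<Longrightarrow> f (A \<union> B) = join (f A) (f B)"
    using fp unfolding join_preserving_def by auto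
  define X0 where "X0 = {lderiv u L | u. u \<notin> L}"
  define K0 where "K0 = \<Union>X0"
  have X0r: "X0 \<subseteq> range (\<lambda>u. lderiv u L)" unfolding X0_def by blast
  have X0f: "finite X0" using derivs_finite[OF reg] X0r finite_subset by blast
  have K0LQ: "K0 \<in> LQ L" unfolding LQ_def K0_def using X0f X0r by blast
  have unLQ: "lderiv w L \<union> K0 \<in> LQ L" for w
  proof -
    have "lderiv w L \<union> K0 = \<Union>(insert (lderiv w L) X0)" unfolding K0_def by simp
    then show ?thesis unfolding LQ_def using X0f X0r by blast
  qed
  have key: "w \<in> L \<longleftrightarrow> \<not> lderiv w L \<subseteq> K0" for w
  proof
    assume "w \<in> L"
    then have "[] \<in> lderiv w L" by (simp add: lderiv_def)
    moreover have "[] \<notin> K0" unfolding K0_def X0_def lderiv_def by auto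
    ultimately show "\<not> lderiv w L \<subseteq> K0" by blast
  next
    assume "\<not> lderiv w L \<subseteq> K0"
    then show "w \<in> L" unfolding K0_def X0_def by blast
  qed
  define s0 where "s0 = f L"
  define c where "c = f K0"
  have LLQ: "L \<in> LQ L" using lderiv_LQ[of "[]" L] by (simp add: lderiv_Nil)
  have s0S: "s0 \<in> S" and cS: "c \<in> S" using fS LLQ K0LQ unfolding s0_def c_def by auto
  have fw: "f (lderiv w L) = \<rho> w s0" for w using fe[OF LLQ] unfolding s0_def .
  have lec: "jsl_le join (\<rho> w s0) c \<longleftrightarrow> lderiv w L \<subseteq> K0" for w
  proof -
    have "jsl_le join (\<rho> w s0) c \<longleftrightarrow> f (lderiv w L \<union> K0) = f K0"
      unfolding jsl_le_def c_def fw[symmetric] fj[OF lderiv_LQ K0LQ] ..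
    also have "\<dots> \<longleftrightarrow> lderiv w L \<union> K0 = K0" using inj_on_eq_iff[OF inj unLQ K0LQ] by simp
    finally show ?thesis by auto
  qed
  define Jr where "Jr = join_irreducibles S join bt"
  have JrS: "Jr \<subseteq> S" unfolding Jr_def join_irreducibles_def by auto
  have finJ: "finite Jr" using JrS finS[OF J] finite_subset by blast
  define T where "T = {(j,a,j'). j \<in> Jr \<and> j' \<in> Jr \<and> jsl_le join j' (\<rho> [a] j)}"
  define I where "I = {j\<in>Jr. jsl_le join j s0}"
  define F where "F = {j\<in>Jr. \<not> jsl_le join j c}"
  have nfa: "is_nfa Jr T I F" unfolding is_nfa_def T_def I_def F_def using finJ by auto
  have inv: "nfa_steps T I w \<subseteq> Jr \<and> lub S join (nfa_steps T I w) (\<rho> w s0)" for w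
  proof (induction w rule: rev_induct)
    case Nil
    show ?case using decomp[OF J s0S] r0[OF s0S] unfolding I_def Jr_def by auto
  next
    case (snoc a w)
    define R where "R = nfa_steps T I w"
    define g where "g = \<rho> [a]"
    define t where "t = \<rho> w s0"
    have RJ: "R \<subseteq> Jr" and Rl: "lub S join R t" using snoc unfolding R_def t_def by auto
    have tS: "t \<in> S" using Rl unfolding lub_def by auto
    have R': "nfa_steps T I (w@[a]) = {j'\<in>Jr. \<exists>j\<in>R. jsl_le join j' (g j)}"
      unfolding nfa_steps_snoc R_def[symmetric] using RJ by (auto simp: T_def g_def)
    have gt: "\<rho> (w@[a]) s0 = g t" unfolding g_def t_def using rapp[OF s0S] by simp
    have Rf: "finite R" using finJ RJ finite_subset by blast
    have RS: "R \<subseteq> S" using RJ JrS by blast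
    obtain t' where t': "lub S join R t'" "lub S join (g`R) (g t')"
      using lub_finite[OF J Rf RS rp[of "[a]"]] unfolding g_def by blast
    have "t' = t" using lub_unique[OF J t'(1) Rl] .
    then have gl: "lub S join (g`R) (g t)" using t'(2) by simp
    have gS: "g t \<in> S" unfolding g_def using rS tS by blast
    have "lub S join {j'\<in>Jr. \<exists>j\<in>R. jsl_le join j' (g j)} (g t)"
      unfolding lub_def
    proof (intro conjI ballI gS)
      fix u assume u: "u \<in> S"
      have "jsl_le join (g t) u \<longleftrightarrow> (\<forall>j\<in>R. jsl_le join (g j) u)" using gl u unfolding lub_def by auto
      also have "\<dots> \<longleftrightarrow> (\<forall>j\<in>R. \<forall>j'\<in>{j'\<in>Jr. jsl_le join j' (g j)}. jsl_le join j' u)"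
      proof -
        have "jsl_le join (g j) u \<longleftrightarrow> (\<forall>j'\<in>{j'\<in>Jr. jsl_le join j' (g j)}. jsl_le join j' u)" if "j \<in> R" for j
        proof -
          have "g j \<in> S" using rS that RJ JrS unfolding g_def by blast
          from decomp[OF J this, folded Jr_def] u show ?thesis unfolding lub_def by blast
        qed
        then show ?thesis by blast
      qed
      also have "\<dots> \<longleftrightarrow> (\<forall>x\<in>{j'\<in>Jr. \<exists>j\<in>R. jsl_le join j' (g j)}. jsl_le join x u)" by blast
      finally show "jsl_le join (g t) u = (\<forall>x\<in>{j'\<in>Jr. \<exists>j\<in>R. jsl_le join j' (g j)}. jsl_le join x u)" .
    qed
    then show ?case using R' gt by auto
  qed
  have "nfa_lang T I F = L"
  proof (rule set_eqI)
    fix w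
    have "w \<in> nfa_lang T I F \<longleftrightarrow> (\<exists>j\<in>nfa_steps T I w. \<not> jsl_le join j c)"
      using inv[of w] unfolding nfa_lang_def F_def by auto
    also have "\<dots> \<longleftrightarrow> \<not> jsl_le join (\<rho> w s0) c" proof -
      have "jsl_le join (\<rho> w s0) c \<longleftrightarrow> (\<forall>x\<in>nfa_steps T I w. jsl_le join x c)"
        using inv[of w] cS unfolding lub_def by blast
      then show ?thesis by blast
    qed
    also have "\<dots> \<longleftrightarrow> w \<in> L" using lec key by blast
    finally show "w \<in> nfa_lang T I F \<longleftrightarrow> w \<in> L" .
  qed
  from ns_le[OF nfa this] show ?thesis unfolding degree_def Jr_def .
qed




lemma lderiv_Un: "lderiv w (A \<union> B) = lderiv w A \<union> lderiv w B" by (auto simp: lderiv_def)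
lemma lderiv_empty: "lderiv w {} = {}" by (auto simp: lderiv_def)
lemma lderiv_append: "lderiv (u@v) K = lderiv v (lderiv u K)" by (auto simp: lderiv_def)
lemma lderiv_UN: "lderiv w (\<Union>(h ` Y)) = (\<Union>y\<in>Y. lderiv w (h y))" by (auto simp: lderiv_def)

lemma part2:
  fixes L :: "'a list set"
  assumes reg: "regular L"
  shows "\<exists>(S::nat set) join bt (\<rho>::'a list \<Rightarrow> nat \<Rightarrow> nat).
            bool_rep S join bt \<rho> \<and> extends_canon L S join bt \<rho> \<and> degree S join bt = ns L"
proof -
  have "\<exists>n. \<exists>(Q::nat set) T I F. is_nfa Q T I F \<and> card Q = n \<and> nfa_lang T I F = L"
    using reg unfolding regular_def by blast
  then have "\<exists>(Q::nat set) T I F. is_nfa Q T I F \<and> card Q = ns L \<and> nfa_lang T I F = L"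
    unfolding ns_def by (rule LeastI_ex)
  then obtain Q T I F where N: "is_nfa (Q::nat set) T I F" "card Q = ns L" "nfa_lang T I F = L"
    by blast
  have TQ: "T \<subseteq> Q \<times> UNIV \<times> Q" and IQ: "I \<subseteq> Q" and finQ: "finite Q" using N(1) by (auto simp: is_nfa_def)
  define lq where "lq = (\<lambda>q. nfa_lang T {q} F)"
  define SL where "SL = {\<Union>(lq ` Y) | Y. Y \<subseteq> Q}"
  have finSL: "finite SL"
  proof -
    have "SL = (\<lambda>Y. \<Union>(lq ` Y)) ` Pow Q" unfolding SL_def by auto
    then show ?thesis using finQ by simp
  qed
  have emSL: "{} \<in> SL" unfolding SL_def by (intro CollectI exI[of _ "{}"]) auto
  have unSL: "A \<union> B \<in> SL" if H: "A \<in> SL" "B \<in> SL" for A B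
  proof -
    obtain Y1 where 1: "A = \<Union>(lq ` Y1)" "Y1 \<subseteq> Q"
      using H(1) unfolding SL_def by blast
    obtain Y2 where 2: "B = \<Union>(lq ` Y2)" "Y2 \<subseteq> Q"
      using H(2) unfolding SL_def by blast
    have "A \<union> B = \<Union>(lq ` (Y1 \<union> Y2))" "Y1 \<union> Y2 \<subseteq> Q" using 1 2 by auto
    then show ?thesis unfolding SL_def by (intro CollectI exI[of _ "Y1 \<union> Y2"]) simp
  qed
  have lq_der: "lderiv w (lq q) = \<Union>(lq ` nfa_steps T {q} w)" for w q
    unfolding lq_def lderiv_nfa_lang by (rule nfa_lang_UN)
  have derSL: "lderiv w A \<in> SL" if H: "A \<in> SL" for A w
  proof -
    obtain Y where Y: "A = \<Union>(lq ` Y)" "Y \<subseteq> Q" using H unfolding SL_def by blast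
    have "lderiv w A = \<Union>(lq ` nfa_steps T Y w)"
      unfolding Y(1) lderiv_UN lq_der using nfa_steps_UN[of T Y w] by auto
    moreover have "nfa_steps T Y w \<subseteq> Q" using nfa_steps_sub[OF TQ Y(2)] .
    ultimately show ?thesis unfolding SL_def by blast
  qed
  have LderL: "lderiv u L = \<Union>(lq ` nfa_steps T I u)" for u
    unfolding N(3)[symmetric] lderiv_nfa_lang lq_def using nfa_lang_UN by blast
  have LQSL: "LQ L \<subseteq> SL"
  proof
    fix K assume "K \<in> LQ L"
    then obtain X where X: "K = \<Union>X" "X \<subseteq> range (\<lambda>u. lderiv u L)" unfolding LQ_def by blast
    define Y where "Y = {q\<in>Q. \<exists>u. lderiv u L \<in> X \<and> q \<in> nfa_steps T I u}"
    have "\<Union>(lq ` Y) = K"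
    proof
      show "\<Union>(lq ` Y) \<subseteq> K" unfolding Y_def X(1) using LderL by blast
      show "K \<subseteq> \<Union>(lq ` Y)"
      proof
        fix v assume "v \<in> K"
        then obtain u where u: "lderiv u L \<in> X" "v \<in> lderiv u L" using X by blast
        then obtain q where "q \<in> nfa_steps T I u" "v \<in> lq q" using LderL by blast
        moreover have "q \<in> Q" using calculation(1) nfa_steps_sub[OF TQ IQ] by blast
        ultimately show "v \<in> \<Union>(lq ` Y)" unfolding Y_def using u(1) by blast
      qed
    qed
    then show "K \<in> SL" unfolding SL_def Y_def by blast
  qed
  obtain e where e: "bij_betw e SL {0..<card SL}" using ex_bij_betw_finite_nat[OF finSL] by blast
  have einj: "inj_on e SL" using e by (simp add: bij_betw_def)
  define d where "d = inv_into SL e"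
  have de: "\<And>A. A \<in> SL \<Longrightarrow> d (e A) = A" unfolding d_def using einj by simp
  define S where "S = e ` SL"
  have ed: "\<And>x. x \<in> S \<Longrightarrow> e (d x) = x" unfolding d_def S_def by (simp add: f_inv_into_f)
  have dS: "\<And>x. x \<in> S \<Longrightarrow> d x \<in> SL" unfolding S_def using de by auto
  define join where "join x y = e (d x \<union> d y)" for x y
  define bt where "bt = e {}"
  define \<rho> where "\<rho> w x = e (lderiv w (d x))" for w x
  have joinS: "join x y \<in> S" if "x \<in> S" "y \<in> S" for x y
    unfolding join_def S_def using unSL dS that by blast
  have le_iff: "jsl_le join x y \<longleftrightarrow> d x \<subseteq> d y" if "x \<in> S" "y \<in> S" for x y
  proof -
    have "jsl_le join x y \<longleftrightarrow> e (d x \<union> d y) = e (d y)" unfolding jsl_le_def join_def using ed that by simp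
    also have "\<dots> \<longleftrightarrow> d x \<union> d y = d y" using inj_on_eq_iff[OF einj unSL[OF dS dS] dS] that by blast
    finally show ?thesis by auto
  qed
  have btS: "bt \<in> S" unfolding bt_def S_def using emSL by blast
  have fj: "fin_jsl S join bt"
    unfolding fin_jsl_def
  proof (intro conjI ballI)
    show "finite S" unfolding S_def using finSL by simp
    show "bt \<in> S" by fact
    fix x assume x: "x \<in> S"
    show "join x x = x" unfolding join_def using ed x by simp
    show "join bt x = x" unfolding join_def bt_def using ed x de emSL by simp
    fix y assume y: "y \<in> S"
    show "join x y \<in> S" using joinS x y .
    show "join x y = join y x" unfolding join_def by (simp add: Un_commute)
    fix z assume z: "z \<in> S"
    show "join (join x y) z = join x (join y z)"
      unfolding join_def using de unSL dS x y z by (simp add: Un_assoc)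
  qed
  have rhoS: "\<rho> w x \<in> S" if "x \<in> S" for w x unfolding \<rho>_def S_def using derSL dS that by blast
  have br: "bool_rep S join bt \<rho>"
    unfolding bool_rep_def
  proof (intro conjI allI ballI fj)
    fix w
    show "join_preserving S join bt S join bt (\<rho> w)"
      unfolding join_preserving_def
    proof (intro conjI ballI)
      fix x assume "x \<in> S" then show "\<rho> w x \<in> S" by (rule rhoS)
    next
      show "\<rho> w bt = bt" unfolding \<rho>_def bt_def using de emSL by (simp add: lderiv_empty)
    next
      fix x y assume x: "x \<in> S" and y: "y \<in> S"
      show "\<rho> w (join x y) = join (\<rho> w x) (\<rho> w y)"
        unfolding \<rho>_def join_def using de unSL dS derSL x y by (simp add: lderiv_Un)
    qed
  next
    fix x assume "x \<in> S" then show "\<rho> [] x = x" unfolding \<rho>_def using ed by (simp add: lderiv_Nil)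
  next
    fix u v x assume x: "x \<in> S"
    show "\<rho> (u @ v) x = \<rho> v (\<rho> u x)" unfolding \<rho>_def using de derSL dS x by (simp add: lderiv_append)
  qed
  have ext: "extends_canon L S join bt \<rho>"
    unfolding extends_canon_def
  proof (intro exI conjI)
    show "inj_on e (LQ L)" using einj LQSL inj_on_subset by blast
    show "equivariant (LQ L) (\<union>) {} (canon_rep L) S join bt \<rho> e"
      unfolding equivariant_def join_preserving_def
    proof (intro conjI ballI allI)
      fix x assume "x \<in> LQ L" then show "e x \<in> S" unfolding S_def using LQSL by blast
    next
      show "e {} = bt" unfolding bt_def ..
    next
      fix x y assume "x \<in> LQ L" "y \<in> LQ L"
      then have "x \<in> SL" "y \<in> SL" using LQSL by auto
      then show "e (x \<union> y) = join (e x) (e y)" unfolding join_def using de by simp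
    next
      fix m s assume "s \<in> LQ L"
      then have "s \<in> SL" using LQSL by auto
      then show "e (canon_rep L m s) = \<rho> m (e s)" unfolding \<rho>_def canon_rep_def using de by simp
    qed
  qed
  have "degree S join bt \<le> ns L"
  proof -
    have "join_irreducibles S join bt \<subseteq> e ` lq ` Q"
    proof
      fix s assume s: "s \<in> join_irreducibles S join bt"
      then have sS: "s \<in> S" unfolding join_irreducibles_def by auto
      then obtain Y where Y: "d s = \<Union>(lq ` Y)" "Y \<subseteq> Q" using dS unfolding SL_def by blast
      have lqSL: "lq q \<in> SL" if "q \<in> Q" for q unfolding SL_def using that by (intro CollectI exI[of _ "{q}"]) auto
      define X where "X = e ` lq ` Y"
      have XS: "X \<subseteq> S" unfolding X_def S_def using lqSL Y(2) by blast
      have dX: "\<And>x. x \<in> X \<Longrightarrow> \<exists>q\<in>Y. d x = lq q" unfolding X_def using de lqSL Y(2) by blast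
      have "is_join_of S join X s"
        unfolding is_join_of_def
      proof (intro conjI ballI impI)
        show "s \<in> S" by fact
        fix x assume x: "x \<in> X"
        show "jsl_le join x s" using le_iff[OF _ sS] XS x dX[OF x] Y(1) by auto
      next
        fix u assume u: "u \<in> S" and h: "\<forall>x\<in>X. jsl_le join x u"
        have "\<forall>q\<in>Y. lq q \<subseteq> d u"
        proof
          fix q assume q: "q \<in> Y"
          have "e (lq q) \<in> X" unfolding X_def using q by blast
          then have "d (e (lq q)) \<subseteq> d u" using h le_iff XS u by blast
          then show "lq q \<subseteq> d u" using de lqSL q Y(2) by auto
        qed
        then show "jsl_le join s u" using le_iff[OF sS u] Y(1) by auto
      qed
      moreover have "\<forall>X. X \<subseteq> S \<and> is_join_of S join X s \<longrightarrow> s \<in> X"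
        using s unfolding join_irreducibles_def by blast
      ultimately have "s \<in> X" using XS by blast
      then show "s \<in> e ` lq ` Q" unfolding X_def using Y(2) by blast
    qed
    then have "degree S join bt \<le> card (e ` lq ` Q)"
      unfolding degree_def using finQ by (simp add: card_mono)
    also have "\<dots> \<le> card (lq ` Q)" using finQ by (simp add: card_image_le)
    also have "\<dots> \<le> card Q" using finQ by (simp add: card_image_le)
    finally show ?thesis using N(2) by simp
  qed
  moreover have "ns L \<le> degree S join bt" using part1[OF reg br ext] .
  ultimately have "degree S join bt = ns L" by simp
  then show ?thesis using br ext by blast
qed


theorem theorem4p6:
  fixes L :: "('a::finite) list set"
  assumes "regular L"
  shows "(\<forall>(S::'b set) join bt (\<rho>::'a list \<Rightarrow> 'b \<Rightarrow> 'b).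
            bool_rep S join bt \<rho> \<and> extends_canon L S join bt \<rho> \<longrightarrow> ns L \<le> degree S join bt)
       \<and> (\<exists>(S::nat set) join bt (\<rho>::'a list \<Rightarrow> nat \<Rightarrow> nat).
            bool_rep S join bt \<rho> \<and> extends_canon L S join bt \<rho> \<and> degree S join bt = ns L)"
proof (intro conjI allI impI)
  fix S :: "'b set" and join bt and \<rho> :: "'a list \<Rightarrow> 'b \<Rightarrow> 'b"
  assume h: "bool_rep S join bt \<rho> \<and> extends_canon L S join bt \<rho>"
  show "ns L \<le> degree S join bt" using part1[OF assms conjunct1[OF h] conjunct2[OF h]] .
next
  show "\<exists>(S::nat set) join bt (\<rho>::'a list \<Rightarrow> nat \<Rightarrow> nat).
            bool_rep S join bt \<rho> \<and> extends_canon L S join bt \<rho> \<and> degree S join bt = ns L"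
    using part2[OF assms] .
qed

end
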